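(* Let $m,n$ be positive integers and let $s:\mathbb{R}\to\mathbb{R}$ be a spline of degree $m$ whose knots are exactly $\alpha_0<\alpha_1<\dots<\alpha_n$. Suppose that $\alpha_0$ and $\alpha_n$ are $s$-separated zeros of $s$ of order $\geq m$, i.e. $s$ is non-constant on $[\alpha_0,\alpha_n]$ and $s^{(j)}(\alpha_0)=s^{(j)}(\alpha_n)=0$ for all $j=0,1,\dots,m-1$. Then (i) $n\geq m+1$, and (ii) $s$ has at most $n-m-1$ separated zeros in the open interval $]\alpha_0,\alpha_n[$.
   Context: A spline of degree $m$ (with finitely many knots) is a function $s\in C^{m-1}(\mathbb{R},\mathbb{R})$ for which there are finitely many points such that on each interval between consecutive such points, and on the two unbounded complementary intervals, $s$ coincides with a polynomial of degree at most $m$. The knots of $s$ are the points at which $s$ is not $C^\infty$ (in any neighbourhood); the intervals between consecutive knots are the polynomiality domains. For a function $f$ and reals $a<b$, the points $a,b$ are $f$-separated if $f$ is non-constant on $[a,b]$; a strictly increasing finite family of points is $f$-separated if every two consecutive points are $f$-separated. "$s$ has at most $k$ separated zeros in a set $I$" means that every $s$-separated family of zeros of $s$ contained in $I$ has at most $k$ elements. The order of a zero $z$ of $f\in C^{m-1}$ is $\min(\{j\in\{0,\dots,m-1\}: f^{(j)}(z)\neq 0\}\cup\{m\})$. *)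

theory Defs
  imports "HOL-Analysis.Analysis" "HOL-Computational_Algebra.Polynomial"
begin

definition C_on :: "nat \<Rightarrow> real set \<Rightarrow> (real \<Rightarrow> real) \<Rightarrow> bool" where
  "C_on k S f \<longleftrightarrow>
     (\<forall>j<k. \<forall>x\<in>S. ((deriv ^^ j) f has_real_derivative (deriv ^^ Suc j) f x) (at x))
     \<and> continuous_on S ((deriv ^^ k) f)"

text \<open>Spline of degree m with finitely many knots: s in C^(m-1)(R) and there is a finite
  set of break points such that on every open interval avoiding them s is a polynomial
  of degree at most m (this covers the intervals between consecutive points and the two
  unbounded intervals).\<close>
definition spline :: "nat \<Rightarrow> (real \<Rightarrow> real) \<Rightarrow> bool" where
  "spline m s \<longleftrightarrow> C_on (m - 1) UNIV s \<and>
     (\<exists>P. finite P \<and> (\<forall>a b. a < b \<longrightarrow> {a<..<b} \<inter> P = {} \<longrightarrow>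
        (\<exists>p :: real poly. degree p \<le> m \<and> (\<forall>x\<in>{a<..<b}. s x = poly p x))))"

definition knots :: "(real \<Rightarrow> real) \<Rightarrow> real set" where
  "knots s = {x. \<not> (\<exists>e>0. \<forall>k. C_on k (ball x e) s)}"

definition separated :: "(real \<Rightarrow> real) \<Rightarrow> real \<Rightarrow> real \<Rightarrow> bool" where
  "separated f a b \<longleftrightarrow> a < b \<and> (\<exists>x\<in>{a..b}. \<exists>y\<in>{a..b}. f x \<noteq> f y)"

definition separated_family :: "(real \<Rightarrow> real) \<Rightarrow> real list \<Rightarrow> bool" where
  "separated_family f zs \<longleftrightarrow> sorted_wrt (<) zs \<and>
     (\<forall>i. Suc i < length zs \<longrightarrow> separated f (zs ! i) (zs ! Suc i))"

definition at_most_sep_zeros :: "(real \<Rightarrow> real) \<Rightarrow> nat \<Rightarrow> real set \<Rightarrow> bool" where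
  "at_most_sep_zeros s k I \<longleftrightarrow>
     (\<forall>zs. separated_family s zs \<longrightarrow> set zs \<subseteq> I \<longrightarrow> (\<forall>z\<in>set zs. s z = 0)
        \<longrightarrow> length zs \<le> k)"

end

theory Submission
  imports Defs
begin



lemma deriv_poly_fun: "deriv (poly p) = poly (pderiv p)"
  by (rule ext, rule DERIV_imp_deriv) (rule poly_DERIV)

lemma deriv_funpow_poly: "(deriv ^^ j) (poly p) = poly ((pderiv ^^ j) p)"
  by (induction j) (auto simp: deriv_poly_fun)

lemma deriv_funpow_Suc: "(deriv ^^ j) (deriv f) = (deriv ^^ Suc j) f"
  by (metis funpow_Suc_right comp_apply)

lemma deriv_funpow_cong_open:
  assumes "open S" "\<forall>x\<in>S. f x = g x" "x \<in> S"
  shows "(deriv ^^ j) f x = (deriv ^^ j) g x"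
  using assms(3)
proof (induction j arbitrary: x)
  case 0 then show ?case using assms by simp
next
  case (Suc j)
  have ev: "eventually (\<lambda>y. y \<in> S) (nhds x)"
    using assms(1) Suc.prems eventually_nhds_in_open by blast
  have "eventually (\<lambda>y. (deriv ^^ j) f y = (deriv ^^ j) g y) (nhds x)"
    by (rule eventually_mono[OF ev]) (use Suc.IH in auto)
  then show ?case by (simp add: deriv_cong_ev)
qed

lemma pderiv_funpow_diff: "(pderiv ^^ j) (p - q) = (pderiv ^^ j) p - (pderiv ^^ j) (q :: real poly)"
  by (induction j) (auto simp: pderiv_diff)

lemma poly_all_derivs_zero:
  fixes r :: "real poly"
  shows "\<forall>j. poly ((pderiv ^^ j) r) x = 0 \<Longrightarrow> r = 0"
proof (induction "degree r" arbitrary: r rule: less_induct)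
  case less
  show ?case
  proof (cases "degree r = 0")
    case True
    then obtain c where "r = [:c:]" by (metis degree_eq_zeroE)
    with less.prems[rule_format, of 0] show ?thesis by simp
  next
    case False
    have "degree (pderiv r) < degree r" using False by (simp add: degree_pderiv)
    moreover have "\<forall>j. poly ((pderiv ^^ j) (pderiv r)) x = 0"
      using less.prems by (metis funpow_Suc_right comp_apply)
    ultimately have "pderiv r = 0" using less.hyps by blast
    then show ?thesis using \<open>degree r \<noteq> 0\<close> pderiv_eq_0_iff by metis
  qed
qed

lemma closure_eq_ext:
  fixes f g :: "real \<Rightarrow> real"
  assumes "continuous_on UNIV f" "continuous_on UNIV g" "u < v" "\<forall>x\<in>{u<..<v}. f x = g x"
  shows "\<forall>x\<in>{u..v}. f x = g x"
proof -
  have "closed {x. f x = g x}" by (rule closed_Collect_eq) (use assms in auto)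
  moreover have "{u<..<v} \<subseteq> {x. f x = g x}" using assms by auto
  ultimately have "closure {u<..<v} \<subseteq> {x. f x = g x}" by (rule closure_minimal[rotated])
  then show ?thesis using assms(3) by auto
qed

lemma poly_zero_interval:
  fixes p :: "real poly"
  assumes "u < v" "\<forall>x\<in>{u<..<v}. poly p x = 0"
  shows "p = 0"
proof (rule ccontr)
  assume "p \<noteq> 0"
  then have "finite {x. poly p x = 0}" by (rule poly_roots_finite)
  moreover have "{u<..<v} \<subseteq> {x. poly p x = 0}" using assms by auto
  ultimately show False using infinite_Ioo[OF assms(1)] finite_subset by blast
qed




lemma merge_nonknot:
  fixes s :: "real \<Rightarrow> real"
  assumes "x \<notin> knots s" "c < x" "x < d"
    and P: "\<forall>y\<in>{c<..<x}. s y = poly p y" and Q: "\<forall>y\<in>{x<..<d}. s y = poly q y"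
  shows "p = q \<and> s x = poly p x"
proof -
  obtain e where e: "e > 0" "\<forall>k. C_on k (ball x e) s"
    using assms(1) unfolding knots_def by auto
  have cont: "isCont ((deriv ^^ j) s) x" for j
  proof -
    have "C_on (Suc j) (ball x e) s" using e by blast
    then have "((deriv ^^ j) s has_real_derivative (deriv ^^ Suc j) s x) (at x)"
      unfolding C_on_def using e(1) by auto
    then show ?thesis by (rule DERIV_isCont)
  qed
  have L: "(deriv ^^ j) s x = poly ((pderiv ^^ j) p) x" for j
  proof -
    have eq: "\<forall>y\<in>{c<..<x}. (deriv ^^ j) s y = poly ((pderiv ^^ j) p) y"
      using deriv_funpow_cong_open[of "{c<..<x}" s "poly p"] P by (auto simp: deriv_funpow_poly)
    have t1: "((deriv ^^ j) s \<longlongrightarrow> (deriv ^^ j) s x) (at_left x)"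
      using cont[of j] by (simp add: isCont_def filterlim_at_split)
    have ev: "eventually (\<lambda>y. poly ((pderiv ^^ j) p) y = (deriv ^^ j) s y) (at_left x)"
      by (rule eventually_mono[OF eventually_at_left_real[OF assms(2)]]) (use eq in auto)
    have t2: "((deriv ^^ j) s \<longlongrightarrow> poly ((pderiv ^^ j) p) x) (at_left x)"
      by (rule Lim_transform_eventually[OF _ ev]) (intro tendsto_intros)
    show ?thesis using tendsto_unique[OF _ t1 t2] by simp
  qed
  have R: "(deriv ^^ j) s x = poly ((pderiv ^^ j) q) x" for j
  proof -
    have eq: "\<forall>y\<in>{x<..<d}. (deriv ^^ j) s y = poly ((pderiv ^^ j) q) y"
      using deriv_funpow_cong_open[of "{x<..<d}" s "poly q"] Q by (auto simp: deriv_funpow_poly)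
    have t1: "((deriv ^^ j) s \<longlongrightarrow> (deriv ^^ j) s x) (at_right x)"
      using cont[of j] by (simp add: isCont_def filterlim_at_split)
    have ev: "eventually (\<lambda>y. poly ((pderiv ^^ j) q) y = (deriv ^^ j) s y) (at_right x)"
      by (rule eventually_mono[OF eventually_at_right_real[OF assms(3)]]) (use eq in auto)
    have t2: "((deriv ^^ j) s \<longlongrightarrow> poly ((pderiv ^^ j) q) x) (at_right x)"
      by (rule Lim_transform_eventually[OF _ ev]) (intro tendsto_intros)
    show ?thesis using tendsto_unique[OF _ t1 t2] by simp
  qed
  have "\<forall>j. poly ((pderiv ^^ j) (p - q)) x = 0"
    using L R by (simp add: pderiv_funpow_diff)
  then have "p - q = 0" by (rule poly_all_derivs_zero)
  then show ?thesis using L[of 0] by simp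
qed

lemma spline_piece:
  fixes s :: "real \<Rightarrow> real"
  assumes fin: "finite P"
    and sp: "\<forall>a b. a < b \<longrightarrow> {a<..<b} \<inter> P = {} \<longrightarrow>
        (\<exists>p :: real poly. degree p \<le> m \<and> (\<forall>x\<in>{a<..<b}. s x = poly p x))"
  shows "c < d \<Longrightarrow> {c<..<d} \<inter> knots s = {} \<Longrightarrow>
     \<exists>p :: real poly. degree p \<le> m \<and> (\<forall>x\<in>{c<..<d}. s x = poly p x)"
proof (induction "card (P \<inter> {c<..<d})" arbitrary: d rule: less_induct)
  case less
  show ?case
  proof (cases "P \<inter> {c<..<d} = {}")
    case True
    then show ?thesis using sp less.prems by (simp add: Int_commute)
  next
    case False
    define x where "x = Max (P \<inter> {c<..<d})"
    have finS: "finite (P \<inter> {c<..<d})" using fin by simp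
    have xin: "x \<in> P \<inter> {c<..<d}" unfolding x_def using Max_in[OF finS False] .
    have xmax: "\<forall>y\<in>P \<inter> {c<..<d}. y \<le> x" unfolding x_def using finS by simp
    have cx: "c < x" "x < d" using xin by auto
    have sub: "P \<inter> {c<..<x} \<subseteq> (P \<inter> {c<..<d}) - {x}" using cx by auto
    have "card (P \<inter> {c<..<x}) < card (P \<inter> {c<..<d})"
    proof -
      have "card (P \<inter> {c<..<x}) \<le> card ((P \<inter> {c<..<d}) - {x})"
        by (rule card_mono) (use finS sub in auto)
      also have "\<dots> < card (P \<inter> {c<..<d})"
        using finS xin by (meson card_Diff1_less)
      finally show ?thesis .
    qed
    moreover have "{c<..<x} \<inter> knots s = {}" using less.prems cx by fastforce
    ultimately obtain p where p: "degree p \<le> m" "\<forall>y\<in>{c<..<x}. s y = poly p y"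
      using less.hyps cx by blast
    have "{x<..<d} \<inter> P = {}"
    proof (rule ccontr)
      assume "{x<..<d} \<inter> P \<noteq> {}"
      then obtain y where "y \<in> P" "x < y" "y < d" by auto
      then show False using xmax cx by force
    qed
    then obtain q where q: "degree q \<le> m" "\<forall>y\<in>{x<..<d}. s y = poly q y"
      using sp cx by blast
    have "x \<notin> knots s" using less.prems cx by auto
    from merge_nonknot[OF this cx p(2) q(2)] have "p = q" "s x = poly p x" by auto
    then have "\<forall>y\<in>{c<..<d}. s y = poly p y"
      using p(2) q(2) by (metis greaterThanLessThan_iff linorder_neqE_linordered_idom)
    then show ?thesis using p(1) by blast
  qed
qed




definition smooth :: "nat \<Rightarrow> (real \<Rightarrow> real) \<Rightarrow> bool" where
  "smooth m f \<longleftrightarrow> (\<forall>j<m-1. \<forall>x. ((deriv^^j) f has_real_derivative (deriv^^Suc j) f x) (at x))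
     \<and> continuous_on UNIV ((deriv^^(m-1)) f)"

definition pw :: "nat \<Rightarrow> (real \<Rightarrow> real) \<Rightarrow> real \<Rightarrow> real \<Rightarrow> real set \<Rightarrow> bool" where
  "pw m f a b K \<longleftrightarrow> (\<forall>c d. a \<le> c \<longrightarrow> c < d \<longrightarrow> d \<le> b \<longrightarrow> {c<..<d} \<inter> K = {} \<longrightarrow>
      (\<exists>p::real poly. degree p \<le> m \<and> (\<forall>x\<in>{c<..<d}. f x = poly p x)))"

definition zord :: "nat \<Rightarrow> (real \<Rightarrow> real) \<Rightarrow> real \<Rightarrow> bool" where
  "zord m f a \<longleftrightarrow> (\<forall>j<m. (deriv^^j) f a = 0)"

lemma smooth_cont:
  assumes "smooth m f" "j < m"
  shows "continuous_on UNIV ((deriv^^j) f)"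
proof (cases "j = m - 1")
  case True then show ?thesis using assms unfolding smooth_def by simp
next
  case False
  then have "j < m - 1" using assms(2) by simp
  then have "\<forall>x. ((deriv^^j) f has_real_derivative (deriv^^Suc j) f x) (at x)"
    using assms(1) unfolding smooth_def by blast
  then show ?thesis by (meson DERIV_isCont continuous_at_imp_continuous_on)
qed

lemma smooth_deriv:
  assumes "smooth (Suc m) f" "1 \<le> m"
  shows "smooth m (deriv f)"
proof -
  have "Suc (m - 1) = m" using assms(2) by simp
  then show ?thesis using assms(1) unfolding smooth_def deriv_funpow_Suc
    by (metis Suc_less_eq diff_Suc_1)
qed

lemma pw_deriv:
  assumes "pw (Suc m) f a b K"
  shows "pw m (deriv f) a b K"
  unfolding pw_def
proof (intro allI impI)
  fix c d assume h: "a \<le> c" "c < d" "d \<le> b" "{c<..<d} \<inter> K = {}"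
  then obtain p where p: "degree p \<le> Suc m" "\<forall>x\<in>{c<..<d}. f x = poly p x"
    using assms unfolding pw_def by blast
  have "\<forall>x\<in>{c<..<d}. deriv f x = poly (pderiv p) x"
    using deriv_funpow_cong_open[of "{c<..<d}" f "poly p" _ 1] p(2)
    by (auto simp: deriv_poly_fun)
  moreover have "degree (pderiv p) \<le> m" using p(1) by (simp add: degree_pderiv)
  ultimately show "\<exists>p::real poly. degree p \<le> m \<and> (\<forall>x\<in>{c<..<d}. deriv f x = poly p x)"
    by blast
qed

lemma zord_deriv: "zord (Suc m) f a \<Longrightarrow> zord m (deriv f) a"
  unfolding zord_def by (metis deriv_funpow_Suc Suc_mono)

lemma sep_family_iff:
  "separated_family f L \<longleftrightarrow> (\<forall>i. Suc i < length L \<longrightarrow> separated f (L!i) (L!Suc i))"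
proof -
  have tr: "transp ((<) :: real \<Rightarrow> real \<Rightarrow> bool)" by (auto simp: transp_def)
  show ?thesis
    unfolding separated_family_def sorted_wrt_iff_nth_Suc_transp[OF tr]
    by (auto simp: separated_def)
qed

lemma count_gaps:
  fixes L :: "real list"
  assumes "sorted_wrt (<) L" "finite K"
    and g: "\<forall>i. Suc i < length L \<longrightarrow> (\<exists>x\<in>K. L!i < x \<and> x < L!Suc i)"
  shows "length L - 1 \<le> card K"
proof -
  obtain h where h: "\<forall>i. Suc i < length L \<longrightarrow> h i \<in> K \<and> L!i < h i \<and> h i < L!Suc i"
    using g by metis
  have inj: "inj_on h {..<length L - 1}"
  proof (rule inj_onI)
    fix i j assume ij: "i \<in> {..<length L - 1}" "j \<in> {..<length L - 1}" "h i = h j"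
    show "i = j"
    proof (rule ccontr)
      assume "i \<noteq> j"
      then consider "i < j" | "j < i" by linarith
      then show False
      proof cases
        case 1
        have "L!Suc i \<le> L!j"
          using assms(1) ij 1 by (cases "Suc i = j") (auto simp: sorted_wrt_iff_nth_less less_imp_le)
        moreover have "Suc i < length L" "Suc j < length L" using ij by auto
        ultimately show False using h ij by (metis less_le_trans order.asym)
      next
        case 2
        have "L!Suc j \<le> L!i"
          using assms(1) ij 2 by (cases "Suc j = i") (auto simp: sorted_wrt_iff_nth_less less_imp_le)
        moreover have "Suc i < length L" "Suc j < length L" using ij by auto
        ultimately show False using h ij by (metis less_le_trans order.asym)
      qed
    qed
  qed
  have "h ` {..<length L - 1} \<subseteq> K" using h by auto
  from card_inj_on_le[OF inj this assms(2)] show ?thesis by simp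
qed

lemma deg1_two_roots:
  fixes p :: "real poly"
  assumes "degree p \<le> 1" "poly p u = 0" "poly p v = 0" "u \<noteq> v"
  shows "p = 0"
proof -
  have eq: "poly p x = coeff p 0 + coeff p 1 * x" for x
  proof -
    have "poly p x = (\<Sum>i\<le>1. coeff p i * x ^ i)"
      unfolding poly_altdef using assms(1)
      by (intro sum.mono_neutral_left) (auto simp: coeff_eq_0)
    then show ?thesis by simp
  qed
  have "coeff p 1 = 0" using assms eq[of u] eq[of v]
    by (metis add_left_cancel mult_cancel_left)
  moreover then have "coeff p 0 = 0" using assms eq[of u] by simp
  ultimately have "coeff p i = 0" for i
  proof -
    have "i = 0 \<or> i = 1 \<or> i > degree p" using assms(1) by linarith
    then show ?thesis using \<open>coeff p 1 = 0\<close> \<open>coeff p 0 = 0\<close> by (auto simp: coeff_eq_0)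
  qed
  then show ?thesis by (simp add: poly_eqI)
qed

lemma rolle_nonzero:
  fixes f :: "real \<Rightarrow> real"
  assumes der: "\<forall>x. (f has_real_derivative f' x) (at x)"
    and "u < v" "f u = 0" "f v = 0" "y \<in> {u..v}" "f y \<noteq> 0"
  shows "\<exists>w\<in>{u<..<v}. f w \<noteq> 0 \<and> f' w = 0"
proof -
  define g where "g x = f x * f x" for x
  have dg: "(g has_real_derivative (f' x * f x + f x * f' x)) (at x)" for x
    unfolding g_def using der by (auto intro!: derivative_eq_intros)
  have "continuous_on {u..v} g"
    by (meson DERIV_isCont continuous_at_imp_continuous_on dg)
  then obtain w where w: "w \<in> {u..v}" "\<forall>z\<in>{u..v}. g z \<le> g w"
    using continuous_attains_sup[of "{u..v}" g] assms(2) by auto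
  have "g y > 0" using assms(6) unfolding g_def by (metis mult_neg_neg mult_pos_pos linorder_neqE_linordered_idom)
  then have gw: "g w > 0" using w assms(5) by fastforce
  then have "f w \<noteq> 0" unfolding g_def by auto
  have "w \<noteq> u" "w \<noteq> v" using gw assms(3,4) unfolding g_def by auto
  then have wi: "u < w" "w < v" using w(1) by auto
  have "f' w * f w + f w * f' w = 0"
  proof (rule DERIV_local_max[OF dg, of "min (w - u) (v - w)"])
    show "0 < min (w - u) (v - w)" using wi by simp
    show "\<forall>y. \<bar>w - y\<bar> < min (w - u) (v - w) \<longrightarrow> g y \<le> g w"
      using w(2) by (auto simp: abs_less_iff)
  qed
  then have "f' w = 0" using \<open>f w \<noteq> 0\<close> by simp
  then show ?thesis using \<open>f w \<noteq> 0\<close> wi by auto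
qed

lemma nonconst_deriv:
  fixes f :: "real \<Rightarrow> real"
  assumes der: "\<forall>x. (f has_real_derivative deriv f x) (at x)"
    and "p \<in> {u..v}" "q \<in> {u..v}" "r \<in> {u..v}" "f p \<noteq> f q" "deriv f r = 0"
  shows "separated (deriv f) u v"
proof (rule ccontr)
  assume ns: "\<not> separated (deriv f) u v"
  have uv: "u < v" using assms(2,3,5) by (cases "p = q") auto
  then have "\<forall>x\<in>{u..v}. deriv f x = 0" using ns assms(4,6) unfolding separated_def by metis
  then have "\<forall>x\<in>{u..v}. f x = f u"
    using DERIV_isconst2[OF uv, of f] der
    by (metis DERIV_isCont continuous_at_imp_continuous_on atLeastAtMost_iff less_imp_le)
  then show False using assms(2,3,5) by metis
qed




lemma core:
  assumes "1 \<le> m" "smooth m f" "finite K" "pw m f a b K" "zord m f a" "zord m f b"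
    "separated_family f (a # zs @ [b])" "\<forall>z\<in>set zs. f z = 0"
  shows "length zs + m \<le> card K"
  using assms
proof (induction m arbitrary: f zs rule: nat_induct_at_least)
  case base
  define L where "L = a # zs @ [b]"
  have srt: "sorted_wrt (<) L" using base.prems(6) unfolding L_def separated_family_def by blast
  have zs_in: "\<forall>z\<in>set zs. a < z \<and> z < b" using srt unfolding L_def by (auto simp: sorted_wrt_append)
  have fa: "f a = 0" "f b = 0" using base.prems(4,5) unfolding zord_def by auto
  have hz: "f (L!i) = 0 \<and> a \<le> L!i \<and> L!i \<le> b" if "i < length L" for i
  proof -
    have "L!i \<in> set L" using that by simp
    then show ?thesis using zs_in fa base.prems(7) srt unfolding L_def by (auto simp: sorted_wrt_append)
  qed
  have sepL: "\<forall>i. Suc i < length L \<longrightarrow> separated f (L!i) (L!Suc i)"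
    using base.prems(6) sep_family_iff unfolding L_def by blast
  have contf: "continuous_on UNIV f" using smooth_cont[OF base.prems(1), of 0] by simp
  have gaps: "\<forall>i. Suc i < length L \<longrightarrow> (\<exists>x\<in>K. L!i < x \<and> x < L!Suc i)"
  proof (intro allI impI)
    fix i assume i: "Suc i < length L"
    let ?u = "L!i" and ?v = "L!Suc i"
    have sep: "separated f ?u ?v" using sepL i by blast
    then have uv: "?u < ?v" unfolding separated_def by simp
    show "\<exists>x\<in>K. ?u < x \<and> x < ?v"
    proof (rule ccontr)
      assume "\<not> (\<exists>x\<in>K. ?u < x \<and> x < ?v)"
      then have "{?u<..<?v} \<inter> K = {}" by auto
      moreover have "a \<le> ?u" "?v \<le> b" using hz[of i] hz[of "Suc i"] i by auto
      ultimately obtain p where p: "degree p \<le> 1" "\<forall>x\<in>{?u<..<?v}. f x = poly p x"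
        using base.prems(3) uv unfolding pw_def by blast
      have eqc: "\<forall>x\<in>{?u..?v}. f x = poly p x"
        by (rule closure_eq_ext[OF contf _ uv p(2)]) (auto intro: continuous_intros)
      have "poly p ?u = 0" "poly p ?v = 0" using eqc hz[of i] hz[of "Suc i"] i uv by auto
      then have "p = 0" using deg1_two_roots[OF p(1)] uv by auto
      then have "\<forall>x\<in>{?u..?v}. f x = 0" using eqc by simp
      then show False using sep unfolding separated_def by auto
    qed
  qed
  have "length L - 1 \<le> card K" by (rule count_gaps[OF srt base.prems(2) gaps])
  then show ?case unfolding L_def by simp
next
  case (Suc m)
  define L where "L = a # zs @ [b]"
  define k where "k = length zs"
  have lenL: "length L = Suc (Suc k)" unfolding L_def k_def by simp
  have srt: "sorted_wrt (<) L" using Suc.prems(6) unfolding L_def separated_family_def by blast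
  have zs_in: "\<forall>z\<in>set zs. a < z \<and> z < b" using srt unfolding L_def by (auto simp: sorted_wrt_append)
  have fa: "f a = 0" "f b = 0" using Suc.prems(4,5) unfolding zord_def by auto
  have hz: "f (L!i) = 0 \<and> a \<le> L!i \<and> L!i \<le> b" if "i < length L" for i
  proof -
    have "L!i \<in> set L" using that by simp
    then show ?thesis using zs_in fa Suc.prems(7) srt unfolding L_def by (auto simp: sorted_wrt_append)
  qed
  have sepL: "\<forall>i. Suc i < length L \<longrightarrow> separated f (L!i) (L!Suc i)"
    using Suc.prems(6) sep_family_iff unfolding L_def by blast
  have der: "\<forall>x. (f has_real_derivative deriv f x) (at x)"
    using Suc.prems(1) Suc.hyps(1) unfolding smooth_def by (metis One_nat_def diff_Suc_1 funpow_0 funpow_Suc_right le_imp_less_Suc comp_apply less_Suc_eq_0_disj not_less_eq_eq funpow_simps_right(1) less_eq_Suc_le)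
  have "\<forall>i. \<exists>w. Suc i < length L \<longrightarrow> (L!i < w \<and> w < L!Suc i \<and> f w \<noteq> 0 \<and> deriv f w = 0)"
  proof
    fix i
    show "\<exists>w. Suc i < length L \<longrightarrow> (L!i < w \<and> w < L!Suc i \<and> f w \<noteq> 0 \<and> deriv f w = 0)"
    proof (cases "Suc i < length L")
      case True
      have sep: "separated f (L!i) (L!Suc i)" using sepL True by blast
      then obtain x y where xy: "x \<in> {L!i..L!Suc i}" "y \<in> {L!i..L!Suc i}" "f x \<noteq> f y"
        and uv: "L!i < L!Suc i" unfolding separated_def by blast
      obtain y' where y': "y' \<in> {L!i..L!Suc i}" "f y' \<noteq> 0" using xy by metis
      have "f (L!i) = 0" "f (L!Suc i) = 0" using hz True by auto
      from rolle_nonzero[OF der uv this y'] show ?thesis using True by auto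
    qed auto
  qed
  then obtain w where w: "\<forall>i. Suc i < length L \<longrightarrow> (L!i < w i \<and> w i < L!Suc i \<and> f (w i) \<noteq> 0 \<and> deriv f (w i) = 0)"
    by metis
  define W where "W = map w [0..<Suc k]"
  define L' where "L' = a # W @ [b]"
  have lenL': "length L' = Suc (Suc (Suc k))" unfolding L'_def W_def by simp
  have L'0: "L'!0 = a" unfolding L'_def by simp
  have L'S: "L'!(Suc i) = w i" if "i \<le> k" for i
    using that unfolding L'_def W_def by (simp add: nth_append)
  have L'last: "L'!(Suc (Suc k)) = b" unfolding L'_def W_def by (simp add: nth_append)
  have Llast: "L!(Suc k) = b" unfolding L_def k_def by (simp add: nth_append)
  have L0: "L!0 = a" unfolding L_def by simp
  have wk: "L!i < w i \<and> w i < L!Suc i \<and> f (w i) \<noteq> 0 \<and> deriv f (w i) = 0" if "i \<le> k" for i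
    using w that lenL by auto
  have sepL': "separated_family (deriv f) L'"
    unfolding sep_family_iff
  proof (intro allI impI)
    fix i assume i: "Suc i < length L'"
    then have "i = 0 \<or> (\<exists>i'. i = Suc i' \<and> i' < k) \<or> i = Suc k" using lenL' by presburger
    then show "separated (deriv f) (L'!i) (L'!Suc i)"
    proof (elim disjE exE conjE)
      assume "i = 0"
      have "separated (deriv f) a (w 0)"
        by (rule nonconst_deriv[OF der, where p=a and q="w 0" and r="w 0"])
           (use wk[of 0] L0 fa in auto)
      then show ?thesis using \<open>i = 0\<close> L'0 L'S[of 0] by simp
    next
      fix i' assume ii: "i = Suc i'" "i' < k"
      have h1: "L!i' < w i'" "w i' < L!Suc i'" "f (w i') \<noteq> 0" "deriv f (w i') = 0"
        using wk[of i'] ii by auto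
      have h2: "L!Suc i' < w (Suc i')" using wk[of "Suc i'"] ii by auto
      have h3: "f (L!Suc i') = 0" using hz[of "Suc i'"] ii lenL by auto
      have "separated (deriv f) (w i') (w (Suc i'))"
        by (rule nonconst_deriv[OF der, where p="w i'" and q="L!Suc i'" and r="w i'"])
           (use h1 h2 h3 in auto)
      then show ?thesis using ii L'S[of i'] L'S[of "Suc i'"] by simp
    next
      assume ii: "i = Suc k"
      have h1: "w k < b" "f (w k) \<noteq> 0" "deriv f (w k) = 0" using wk[of k] Llast by auto
      have "separated (deriv f) (w k) b"
        by (rule nonconst_deriv[OF der, where p="w k" and q=b and r="w k"])
           (use h1 fa in auto)
      then show ?thesis using ii L'S[of k] L'last by simp
    qed
  qed
  have zW: "\<forall>z\<in>set W. deriv f z = 0" unfolding W_def using wk by auto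
  have "length W + m \<le> card K"
    using Suc.IH[OF smooth_deriv[OF Suc.prems(1) Suc.hyps(1)] Suc.prems(2)
        pw_deriv[OF Suc.prems(3)] zord_deriv[OF Suc.prems(4)] zord_deriv[OF Suc.prems(5)]
        sepL'[unfolded L'_def] zW] .
  then show ?case unfolding W_def k_def by simp
qed




lemma deriv_funpow_zero: "(deriv ^^ j) (\<lambda>_. 0::real) = (\<lambda>_. 0)"
proof (induction j)
  case (Suc j)
  have "deriv (\<lambda>_. 0::real) = (\<lambda>_. 0)" by (rule ext, rule DERIV_imp_deriv) (rule DERIV_const)
  then show ?case using Suc by simp
qed simp

lemma Dzero:
  assumes "smooth m f" "u < v" "\<forall>x\<in>{u<..<v}. f x = 0"
  shows "zord m f u \<and> zord m f v"
proof -
  have "(deriv ^^ j) f u = 0 \<and> (deriv ^^ j) f v = 0" if j: "j < m" for j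
  proof -
    have "\<forall>x\<in>{u<..<v}. (deriv ^^ j) f x = (deriv ^^ j) (\<lambda>_. 0) x"
      using deriv_funpow_cong_open[of "{u<..<v}" f "\<lambda>_. 0"] assms(3) by auto
    then have "\<forall>x\<in>{u<..<v}. (deriv ^^ j) f x = 0" by (simp add: deriv_funpow_zero)
    then have "\<forall>x\<in>{u..v}. (deriv ^^ j) f x = 0"
      by (intro closure_eq_ext[OF smooth_cont[OF assms(1) j] _ assms(2)]) auto
    then show ?thesis using assms(2) by auto
  qed
  then show ?thesis unfolding zord_def by auto
qed

lemma sep_family_drop: "separated_family f zs \<Longrightarrow> separated_family f (drop d zs)"
  unfolding sep_family_iff by (auto simp: add.commute)

lemma sep_family_take: "separated_family f zs \<Longrightarrow> separated_family f (take d zs)"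
  unfolding sep_family_iff by auto

lemma sorted_nth_le:
  fixes zs :: "real list"
  assumes "separated_family f zs" "i \<le> j" "j < length zs"
  shows "zs!i \<le> zs!j"
  using assms unfolding separated_family_def sorted_wrt_iff_nth_less
  by (cases "i = j") (auto intro: less_imp_le)




lemma wrap:
  assumes "1 \<le> m" "smooth m f"
  shows "finite K \<Longrightarrow> K \<subseteq> {a<..<b} \<Longrightarrow> pw m f a b K \<Longrightarrow> zord m f a \<Longrightarrow> zord m f b
    \<Longrightarrow> separated f a b \<Longrightarrow> separated_family f zs \<Longrightarrow> set zs \<subseteq> {a<..<b}
    \<Longrightarrow> \<forall>z\<in>set zs. f z = 0 \<Longrightarrow> length zs + m \<le> card K"
proof (induction "card K" arbitrary: a b K zs rule: less_induct)
  case less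
  note fin = less.prems(1) and Ksub = less.prems(2) and pwK = less.prems(3)
    and za = less.prems(4) and zb = less.prems(5) and sepab = less.prems(6)
    and fam = less.prems(7) and zsin = less.prems(8) and zz = less.prems(9)
  have ab: "a < b" using sepab unfolding separated_def by simp
  have fa: "f a = 0" "f b = 0" using za zb assms(1) unfolding zord_def by auto
  have contf: "continuous_on UNIV f" using smooth_cont[OF assms(2), of 0] assms(1) by simp
  have notall0: "\<not> (\<forall>x\<in>{a..b}. f x = 0)" using sepab unfolding separated_def by metis
  have zsnth: "a < zs!i \<and> zs!i < b" if "i < length zs" for i
    using zsin nth_mem[OF that] by auto
  show ?case
  proof (cases "zs \<noteq> [] \<and> \<not> separated f a (zs!0)")
    case hA: True
    define z1 where "z1 = zs!0"
    have z1: "a < z1" "z1 < b" using zsnth[of 0] hA unfolding z1_def by auto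
    have f0z1: "\<forall>x\<in>{a..z1}. f x = 0"
      using hA z1 fa unfolding separated_def z1_def by (metis atLeastAtMost_iff order_refl less_imp_le)
    define \<kappa> where "\<kappa> = Min (insert b K)"
    have kin: "\<kappa> \<in> insert b K" unfolding \<kappa>_def using fin by (metis Min_in finite_insert insert_not_empty)
    have kle: "\<forall>y\<in>insert b K. \<kappa> \<le> y" unfolding \<kappa>_def using fin by simp
    have ak: "a < \<kappa>" "\<kappa> \<le> b" using kin Ksub ab kle by auto
    have "{a<..<\<kappa>} \<inter> K = {}" using kle by fastforce
    then obtain p where p: "\<forall>x\<in>{a<..<\<kappa>}. f x = poly p x"
      using pwK ak unfolding pw_def by blast
    have f0o: "\<forall>x\<in>{a<..<\<kappa>}. f x = 0"
    proof (cases "\<kappa> \<le> z1")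
      case True then show ?thesis using f0z1 by auto
    next
      case False
      have "\<forall>x\<in>{a<..<z1}. poly p x = 0"
      proof
        fix x assume "x \<in> {a<..<z1}"
        then have "x \<in> {a<..<\<kappa>}" "x \<in> {a..z1}" using False by auto
        then show "poly p x = 0" using p f0z1 by metis
      qed
      then have "p = 0" using poly_zero_interval z1(1) by blast
      then show ?thesis using p by simp
    qed
    have f0k: "\<forall>x\<in>{a..\<kappa>}. f x = 0"
      using closure_eq_ext[OF contf _ ak(1), of "\<lambda>_. 0"] f0o by auto
    have kb: "\<kappa> \<noteq> b" using f0k notall0 by auto
    then have kK: "\<kappa> \<in> K" "\<kappa> < b" using kin ak by auto
    have zk: "zord m f \<kappa>" using Dzero[OF assms(2) ak(1) f0o] by simp
    have sepk: "separated f \<kappa> b"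
    proof (rule ccontr)
      assume "\<not> separated f \<kappa> b"
      then have h: "\<forall>x\<in>{\<kappa>..b}. \<forall>y\<in>{\<kappa>..b}. f x = f y"
        using kK unfolding separated_def by blast
      have "\<forall>x\<in>{a..b}. f x = 0"
      proof
        fix x assume x: "x \<in> {a..b}"
        show "f x = 0"
        proof (cases "\<kappa> \<le> x")
          case True
          then have "x \<in> {\<kappa>..b}" "b \<in> {\<kappa>..b}" using x kK by auto
          then show ?thesis using h fa by metis
        next
          case False
          then show ?thesis using x f0k by auto
        qed
      qed
      then show False using notall0 by simp
    qed
    define K' where "K' = K - {\<kappa>}"
    have cardK': "card K' < card K" unfolding K'_def using fin kK by (meson card_Diff1_less)
    have cardK'': "card K' = card K - 1" unfolding K'_def using fin kK by simp
    have K'sub: "K' \<subseteq> {\<kappa><..<b}" unfolding K'_def using kle Ksub by fastforce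
    have pw': "pw m f \<kappa> b K'"
      unfolding pw_def
    proof (intro allI impI)
      fix c d assume h: "\<kappa> \<le> c" "c < d" "d \<le> b" "{c<..<d} \<inter> K' = {}"
      then have "{c<..<d} \<inter> K = {}" unfolding K'_def by auto
      then show "\<exists>p::real poly. degree p \<le> m \<and> (\<forall>x\<in>{c<..<d}. f x = poly p x)"
        using pwK h ak unfolding pw_def by auto
    qed
    define d where "d = (if zs!0 \<le> \<kappa> then 1 else (0::nat))"
    have big: "\<kappa> < zs!j" if "d \<le> j" "j < length zs" for j
    proof (cases "zs!0 \<le> \<kappa>")
      case True
      then have j1: "1 \<le> j" using that unfolding d_def by simp
      have "\<kappa> < zs!1"
      proof (rule ccontr)
        assume "\<not> \<kappa> < zs!1"
        have s01: "separated f (zs!0) (zs!1)" using fam that j1 unfolding sep_family_iff by auto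
        have "1 < length zs" using that j1 by simp
        then have "0 < length zs" by linarith
        then have "zs!0 \<ge> a" "zs!1 \<ge> a" using zsnth[of 0] zsnth[of 1] \<open>1 < length zs\<close> by (simp_all add: less_imp_le)
        then have "\<forall>x\<in>{zs!0..zs!1}. f x = 0" using f0k \<open>\<not> \<kappa> < zs!1\<close> by auto
        then show False using s01 unfolding separated_def by auto
      qed
      then show ?thesis using sorted_nth_le[OF fam j1 that(2)] by simp
    next
      case False
      then show ?thesis using sorted_nth_le[OF fam _ that(2), of 0] by simp
    qed
    define zs' where "zs' = drop d zs"
    have fam': "separated_family f zs'" unfolding zs'_def by (rule sep_family_drop[OF fam])
    have zs'in: "set zs' \<subseteq> {\<kappa><..<b}"
    proof
      fix z assume "z \<in> set zs'"
      then obtain j where j: "j < length zs'" "z = zs'!j" by (metis in_set_conv_nth)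
      then have "z = zs!(d + j)" "d + j < length zs" unfolding zs'_def by auto
      then show "z \<in> {\<kappa><..<b}" using big[of "d + j"] zsnth[of "d+j"] by auto
    qed
    have zz': "\<forall>z\<in>set zs'. f z = 0" using zz unfolding zs'_def by (meson in_set_dropD)
    have "length zs' + m \<le> card K'"
      using less.hyps[OF cardK' _ _ pw' zk zb sepk fam' zs'in zz'] fin K'sub unfolding K'_def by auto
    moreover have "length zs \<le> length zs' + 1" unfolding zs'_def d_def by auto
    moreover have "card K \<ge> 1" using fin kK by (metis One_nat_def Suc_leI card_gt_0_iff empty_iff)
    ultimately show ?thesis using cardK'' by linarith
  next
    case nA: False
    show ?thesis
    proof (cases "zs \<noteq> [] \<and> \<not> separated f (zs!(length zs - 1)) b")
      case hB: True
      define n where "n = length zs"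
      define z1 where "z1 = zs!(n - 1)"
      have n0: "n > 0" using hB unfolding n_def by simp
      have z1: "a < z1" "z1 < b" using zsnth[of "n-1"] n0 unfolding z1_def n_def by auto
      have f0z1: "\<forall>x\<in>{z1..b}. f x = 0"
        using hB z1 fa unfolding separated_def z1_def n_def by (metis atLeastAtMost_iff order_refl less_imp_le)
      define \<kappa> where "\<kappa> = Max (insert a K)"
      have kin: "\<kappa> \<in> insert a K" unfolding \<kappa>_def using fin by (metis Max_in finite_insert insert_not_empty)
      have kle: "\<forall>y\<in>insert a K. y \<le> \<kappa>" unfolding \<kappa>_def using fin by simp
      have ak: "\<kappa> < b" "a \<le> \<kappa>" using kin Ksub ab kle by auto
      have "{\<kappa><..<b} \<inter> K = {}" using kle by fastforce
      then obtain p where p: "\<forall>x\<in>{\<kappa><..<b}. f x = poly p x"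
        using pwK ak unfolding pw_def by blast
      have f0o: "\<forall>x\<in>{\<kappa><..<b}. f x = 0"
      proof (cases "z1 \<le> \<kappa>")
        case True then show ?thesis using f0z1 by auto
      next
        case False
        have "\<forall>x\<in>{z1<..<b}. poly p x = 0"
        proof
          fix x assume "x \<in> {z1<..<b}"
          then have "x \<in> {\<kappa><..<b}" "x \<in> {z1..b}" using False by auto
          then show "poly p x = 0" using p f0z1 by metis
        qed
        then have "p = 0" using poly_zero_interval z1(2) by blast
        then show ?thesis using p by simp
      qed
      have f0k: "\<forall>x\<in>{\<kappa>..b}. f x = 0"
        using closure_eq_ext[OF contf _ ak(1), of "\<lambda>_. 0"] f0o by auto
      have kb: "\<kappa> \<noteq> a" using f0k notall0 by auto
      then have kK: "\<kappa> \<in> K" "a < \<kappa>" using kin ak by auto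
      have zk: "zord m f \<kappa>" using Dzero[OF assms(2) ak(1) f0o] by simp
      have sepk: "separated f a \<kappa>"
      proof (rule ccontr)
        assume "\<not> separated f a \<kappa>"
        then have h: "\<forall>x\<in>{a..\<kappa>}. \<forall>y\<in>{a..\<kappa>}. f x = f y"
          using kK unfolding separated_def by blast
        have "\<forall>x\<in>{a..b}. f x = 0"
        proof
          fix x assume x: "x \<in> {a..b}"
          show "f x = 0"
          proof (cases "x \<le> \<kappa>")
            case True
            then have "x \<in> {a..\<kappa>}" "a \<in> {a..\<kappa>}" using x kK by auto
            then show ?thesis using h fa by metis
          next
            case False
            then show ?thesis using x f0k by auto
          qed
        qed
        then show False using notall0 by simp
      qed
      define K' where "K' = K - {\<kappa>}"
      have cardK': "card K' < card K" unfolding K'_def using fin kK by (meson card_Diff1_less)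
      have cardK'': "card K' = card K - 1" unfolding K'_def using fin kK by simp
      have K'sub: "K' \<subseteq> {a<..<\<kappa>}" unfolding K'_def using kle Ksub by fastforce
      have pw': "pw m f a \<kappa> K'"
        unfolding pw_def
      proof (intro allI impI)
        fix c d assume h: "a \<le> c" "c < d" "d \<le> \<kappa>" "{c<..<d} \<inter> K' = {}"
        then have "{c<..<d} \<inter> K = {}" unfolding K'_def by auto
        then show "\<exists>p::real poly. degree p \<le> m \<and> (\<forall>x\<in>{c<..<d}. f x = poly p x)"
          using pwK h ak unfolding pw_def by auto
      qed
      define d where "d = (if \<kappa> \<le> z1 then 1 else (0::nat))"
      have big: "zs!j < \<kappa>" if "j < n - d" for j
      proof (cases "\<kappa> \<le> z1")
        case True
        then have j1: "j \<le> n - 2" "n \<ge> 2" using that unfolding d_def by auto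
        have "zs!(n-2) < \<kappa>"
        proof (rule ccontr)
          assume "\<not> zs!(n-2) < \<kappa>"
          have s01: "separated f (zs!(n-2)) (zs!(n-1))" using fam j1 unfolding sep_family_iff n_def
            by (metis One_nat_def Suc_diff_Suc Suc_le_lessD diff_Suc_less n0 n_def numeral_2_eq_2)
          have "zs!(n-1) \<le> b" using zsnth[of "n-1"] n0 unfolding n_def by auto
          then have "\<forall>x\<in>{zs!(n-2)..zs!(n-1)}. f x = 0" using f0k \<open>\<not> zs!(n-2) < \<kappa>\<close> by auto
          then show False using s01 unfolding separated_def by auto
        qed
        moreover have "n - 2 < n" using j1 by simp
        ultimately show ?thesis using sorted_nth_le[OF fam j1(1)] unfolding n_def by (meson le_less_trans)
      next
        case False
        have jn: "j < n" using that False unfolding d_def by simp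
        then have "zs!j \<le> zs!(n-1)" using sorted_nth_le[OF fam, of j "n-1"] n0 unfolding n_def by simp
        then show ?thesis using False unfolding z1_def by simp
      qed
      define zs' where "zs' = take (n - d) zs"
      have fam': "separated_family f zs'" unfolding zs'_def by (rule sep_family_take[OF fam])
      have zs'in: "set zs' \<subseteq> {a<..<\<kappa>}"
      proof
        fix z assume "z \<in> set zs'"
        then obtain j where j: "j < length zs'" "z = zs'!j" by (metis in_set_conv_nth)
        then have "z = zs!j" "j < n - d" "j < n" unfolding zs'_def n_def by auto
        then show "z \<in> {a<..<\<kappa>}" using big[of j] zsnth[of j] unfolding n_def by auto
      qed
      have zz': "\<forall>z\<in>set zs'. f z = 0" using zz unfolding zs'_def by (meson in_set_takeD)
      have "length zs' + m \<le> card K'"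
        using less.hyps[OF cardK' _ _ pw' za zk sepk fam' zs'in zz'] fin K'sub unfolding K'_def by auto
      moreover have "length zs \<le> length zs' + 1" unfolding zs'_def d_def n_def by auto
      moreover have "card K \<ge> 1" using fin kK by (metis One_nat_def Suc_leI card_gt_0_iff empty_iff)
      ultimately show ?thesis using cardK'' by linarith
    next
      case nB: False
      have "separated_family f (a # zs @ [b])"
        unfolding sep_family_iff
      proof (intro allI impI)
        fix i assume i: "Suc i < length (a # zs @ [b])"
        show "separated f ((a # zs @ [b])!i) ((a # zs @ [b])!Suc i)"
        proof (cases i)
          case 0
          then show ?thesis using nA sepab by (cases zs) auto
        next
          case (Suc i')
          show ?thesis
          proof (cases "Suc i' < length zs")
            case True
            then show ?thesis using fam Suc unfolding sep_family_iff by (simp add: nth_append)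
          next
            case False
            then have L: "Suc i' = length zs" using i Suc by simp
            have il: "i' < length zs" using L by simp
            have "(a # zs @ [b]) ! Suc i' = zs ! i'"
              by (simp only: nth_Cons_Suc) (simp add: nth_append il)
            moreover have "(a # zs @ [b]) ! Suc (Suc i') = b"
              by (simp only: nth_Cons_Suc L) simp
            moreover have "zs \<noteq> []" "length zs - 1 = i'" using L by auto
            ultimately show ?thesis using nB Suc L by simp
          qed
        qed
      qed
      then show ?thesis using core[OF assms(1,2) fin pwK za zb] zz by blast
    qed
  qed
qed




theorem mainTheorem2:
  fixes m n :: nat and s :: "real \<Rightarrow> real" and \<alpha> :: "nat \<Rightarrow> real"
  assumes "m > 0" and "n > 0"
    and "spline m s"
    and "strict_mono_on {0..n} \<alpha>"
    and "knots s = \<alpha> ` {0..n}"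
    and "separated s (\<alpha> 0) (\<alpha> n)"
    and "\<forall>j<m. (deriv ^^ j) s (\<alpha> 0) = 0 \<and> (deriv ^^ j) s (\<alpha> n) = 0"
  shows "n \<ge> m + 1 \<and> at_most_sep_zeros s (n - m - 1) {\<alpha> 0<..<\<alpha> n}"
proof -
  define a where "a = \<alpha> 0"
  define b where "b = \<alpha> n"
  define K where "K = \<alpha> ` {1..<n}"
  obtain P where Pfin: "finite P" and Psp: "\<forall>a b. a < b \<longrightarrow> {a<..<b} \<inter> P = {} \<longrightarrow>
        (\<exists>p :: real poly. degree p \<le> m \<and> (\<forall>x\<in>{a<..<b}. s x = poly p x))"
    using assms(3) unfolding spline_def by blast
  have sm: "smooth m s" using assms(3) unfolding spline_def C_on_def smooth_def by blast
  have m1: "1 \<le> m" using assms(1) by simp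
  have mono: "\<alpha> i < \<alpha> j" if "i < j" "j \<le> n" for i j
    using strict_mono_onD[OF assms(4)] that by simp
  have ab: "a < b" unfolding a_def b_def using mono[of 0 n] assms(2) by simp
  have finK: "finite K" unfolding K_def by simp
  have inj: "inj_on \<alpha> {1..<n}"
    using strict_mono_on_imp_inj_on[OF assms(4)] by (rule inj_on_subset) auto
  have cardK: "card K = n - 1" unfolding K_def using card_image[OF inj] by simp
  have Ksub: "K \<subseteq> {a<..<b}" unfolding K_def a_def b_def using mono by auto
  have kn: "knots s = insert a (insert b K)"
  proof -
    have "{0..n} = insert 0 (insert n {1..<n})" using assms(2) by auto
    then show ?thesis unfolding assms(5) a_def b_def K_def by simp
  qed
  have pwK: "pw m s a b K"
    unfolding pw_def
  proof (intro allI impI)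
    fix c d assume h: "a \<le> c" "c < d" "d \<le> b" "{c<..<d} \<inter> K = {}"
    then have "{c<..<d} \<inter> knots s = {}" unfolding kn by auto
    then show "\<exists>p::real poly. degree p \<le> m \<and> (\<forall>x\<in>{c<..<d}. s x = poly p x)"
      using spline_piece[OF Pfin Psp h(2)] by blast
  qed
  have za: "zord m s a" and zb: "zord m s b"
    using assms(7) unfolding zord_def a_def b_def by auto
  have sab: "separated s a b" using assms(6) unfolding a_def b_def .
  have W: "length zs + m \<le> card K"
    if "separated_family s zs" "set zs \<subseteq> {a<..<b}" "\<forall>z\<in>set zs. s z = 0" for zs
    using wrap[OF m1 sm finK Ksub pwK za zb sab that] .
  have "0 + m \<le> card K" using W[of "[]"] unfolding separated_family_def by simp
  then have n1: "n \<ge> m + 1" using cardK m1 by linarith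
  have "at_most_sep_zeros s (n - m - 1) {\<alpha> 0<..<\<alpha> n}"
    unfolding at_most_sep_zeros_def
  proof (intro allI impI)
    fix zs assume "separated_family s zs" "set zs \<subseteq> {\<alpha> 0<..<\<alpha> n}" "\<forall>z\<in>set zs. s z = 0"
    then have "length zs + m \<le> card K" using W unfolding a_def b_def by blast
    then show "length zs \<le> n - m - 1" using cardK by simp
  qed
  then show ?thesis using n1 by simp
qed


end
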